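(* Let $a \leq b$ be natural numbers. Then \[ \alpha(\{a, a+1, \ldots, b\}) \geq \frac{a}{a+b} = \frac{1}{1 + \frac{b}{a}}. \]
   Context: For a finite $D \subset \mathbb{N} = \{1,2,\ldots\}$ and $n \geq 1$, the circulant graph $G_n$ with set of distances $D$ has vertex set $\{0, \ldots, n-1\}$, vertices $u, v$ (possibly equal) being adjacent iff $u - v \equiv d$ or $v - u \equiv d \pmod n$ for some $d \in D$. $\alpha(G)$ is the maximum size of an independent set (no two adjacent vertices, no looped vertex), and $\alpha(D) := \lim_{n\to\infty} \alpha(G_n)/n$ (which exists). *)

theory Defs
  imports Complex_Main "HOL-Number_Theory.Cong"
begin

text \<open>Independent sets of the circulant graph G_n with set of distances D:
  vertices 0..n-1, u and v (possibly equal) adjacent iff u - v = d or v - u = d (mod n)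
  for some d in D.\<close>
definition circ_indep :: "nat set \<Rightarrow> nat \<Rightarrow> nat set \<Rightarrow> bool" where
  "circ_indep D n S \<longleftrightarrow> S \<subseteq> {..<n} \<and>
     (\<forall>u\<in>S. \<forall>v\<in>S. \<forall>d\<in>D.
        \<not> [int u - int v = int d] (mod int n) \<and> \<not> [int v - int u = int d] (mod int n))"

definition alpha_circ :: "nat set \<Rightarrow> nat \<Rightarrow> nat" where
  "alpha_circ D n = Max (card ` {S. circ_indep D n S})"

text \<open>alpha(D) = lim_{n\<rightarrow>\<infinity>} alpha(G_n)/n (the limit exists).\<close>
definition alpha_dist :: "nat set \<Rightarrow> real" where
  "alpha_dist D = lim (\<lambda>n. real (alpha_circ D n) / real n)"

end

theory Submission
  imports Defs
begin

definition path_indep :: "nat set \<Rightarrow> nat \<Rightarrow> nat set \<Rightarrow> bool" where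
  "path_indep D L S \<longleftrightarrow> S \<subseteq> {..<L} \<and> (\<forall>u\<in>S. \<forall>v\<in>S. \<forall>d\<in>D. u \<noteq> v + d)"

definition pmax :: "nat set \<Rightarrow> nat \<Rightarrow> nat" where
  "pmax D L = Max (card ` {S. path_indep D L S})"

lemma path_fin: "finite (card ` {S. path_indep D L S})"
proof -
  have "{S. path_indep D L S} \<subseteq> Pow {..<L}" by (auto simp: path_indep_def)
  then show ?thesis by (meson finite_Pow_iff finite_lessThan finite_subset finite_imageI)
qed

lemma pmax_ge: "path_indep D L S \<Longrightarrow> card S \<le> pmax D L"
  unfolding pmax_def using path_fin by (intro Max_ge) auto

lemma pmax_ex: "\<exists>S. path_indep D L S \<and> card S = pmax D L"
proof -
  have "{} \<in> {S. path_indep D L S}" by (simp add: path_indep_def)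
  then have "pmax D L \<in> card ` {S. path_indep D L S}"
    unfolding pmax_def using path_fin by (intro Max_in) auto
  then show ?thesis by auto
qed

lemma pmax_le: "pmax D L \<le> L"
proof -
  obtain S where "path_indep D L S" "card S = pmax D L" using pmax_ex by blast
  then show ?thesis unfolding path_indep_def by (metis card_lessThan card_mono finite_lessThan)
qed

lemma pmax_sub: "pmax D (m + n) \<le> pmax D m + pmax D n"
proof -
  obtain S where S: "path_indep D (m+n) S" "card S = pmax D (m+n)" using pmax_ex by blast
  define S1 where "S1 = S \<inter> {..<m}"
  define S2 where "S2 = (\<lambda>x. x - m) ` (S \<inter> {m..})"
  have fS: "finite S" using S(1) unfolding path_indep_def using finite_subset by blast
  have "S = S1 \<union> (S \<inter> {m..})" unfolding S1_def by auto
  then have "card S \<le> card S1 + card (S \<inter> {m..})" by (metis card_Un_le)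
  moreover have "card (S \<inter> {m..}) = card S2" unfolding S2_def
    by (rule card_image[symmetric]) (auto simp: inj_on_def)
  moreover have "path_indep D m S1" using S(1) unfolding path_indep_def S1_def by auto
  moreover have "path_indep D n S2"
  proof -
    have "S2 \<subseteq> {..<n}" using S(1) unfolding path_indep_def S2_def by auto
    moreover have "\<forall>u\<in>S2. \<forall>v\<in>S2. \<forall>d\<in>D. u \<noteq> v + d"
    proof (intro ballI)
      fix u v d assume "u \<in> S2" "v \<in> S2" "d \<in> D"
      then obtain u' v' where "u' \<in> S" "v' \<in> S" "u' \<ge> m" "v' \<ge> m" "u = u' - m" "v = v' - m"
        unfolding S2_def by auto
      then show "u \<noteq> v + d" using S(1) \<open>d \<in> D\<close> unfolding path_indep_def
        by (metis add.commute le_add_diff_inverse add.assoc)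
    qed
    ultimately show ?thesis unfolding path_indep_def by blast
  qed
  ultimately show ?thesis using S(2) pmax_ge by (metis add_mono order_trans)
qed

lemma pmax_mult: "pmax D (k * L + r) \<le> k * pmax D L + pmax D r"
proof (induction k)
  case 0 then show ?case by simp
next
  case (Suc k)
  have "pmax D (Suc k * L + r) = pmax D (L + (k * L + r))" by (simp add: add.assoc)
  also have "\<dots> \<le> pmax D L + pmax D (k * L + r)" by (rule pmax_sub)
  finally show ?case using Suc by simp
qed

lemma circ_fin: "finite (card ` {S. circ_indep D n S})"
proof -
  have "{S. circ_indep D n S} \<subseteq> Pow {..<n}" by (auto simp: circ_indep_def)
  then show ?thesis by (meson finite_Pow_iff finite_lessThan finite_subset finite_imageI)
qed

lemma alpha_ge: "circ_indep D n S \<Longrightarrow> card S \<le> alpha_circ D n"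
  unfolding alpha_circ_def using circ_fin by (intro Max_ge) auto

lemma alpha_ex: "\<exists>S. circ_indep D n S \<and> card S = alpha_circ D n"
proof -
  have "{} \<in> {S. circ_indep D n S}" by (simp add: circ_indep_def)
  then have "alpha_circ D n \<in> card ` {S. circ_indep D n S}"
    unfolding alpha_circ_def using circ_fin by (intro Max_in) auto
  then show ?thesis by auto
qed

lemma alpha_le_pmax: "alpha_circ D n \<le> pmax D n"
proof -
  obtain S where S: "circ_indep D n S" "card S = alpha_circ D n" using alpha_ex by blast
  have "path_indep D n S"
    unfolding path_indep_def
  proof (intro conjI ballI)
    show "S \<subseteq> {..<n}" using S(1) by (simp add: circ_indep_def)
    fix u v d assume "u \<in> S" "v \<in> S" "d \<in> D"
    then have "\<not> [int u - int v = int d] (mod int n)" using S(1) by (simp add: circ_indep_def)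
    then show "u \<noteq> v + d" by auto
  qed
  then show ?thesis using S(2) pmax_ge by metis
qed

lemma cong_small:
  fixes x :: int
  assumes "[x = 0] (mod int n)" "- int n < x" "x < int n"
  shows "x = 0"
proof -
  from assms(1) obtain k where k: "x = int n * k" by (auto simp: cong_iff_dvd_diff dvd_def)
  show ?thesis
  proof (cases "k = 0")
    case False
    then have "k \<ge> 1 \<or> k \<le> -1" by linarith
    then show ?thesis using assms(2,3) k
      by (metis abs_of_nonneg add.inverse_inverse int_ops(1) less_le_not_le mult_1_right
          mult_minus_right neg_le_iff_le of_nat_0_le_iff mult_left_mono)
  qed (simp add: k)
qed

lemma pmax_le_alpha:
  assumes "\<And>d. d \<in> D \<Longrightarrow> 1 \<le> d \<and> d \<le> M" "L + M \<le> n"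
  shows "pmax D L \<le> alpha_circ D n"
proof -
  obtain S where S: "path_indep D L S" "card S = pmax D L" using pmax_ex by blast
  have key: "\<not> [int u - int v = int d] (mod int n)" if "u \<in> S" "v \<in> S" "d \<in> D" for u v d
  proof
    assume c: "[int u - int v = int d] (mod int n)"
    have "u < L" "v < L" using S(1) that unfolding path_indep_def by auto
    moreover have "1 \<le> d" "d \<le> M" using assms(1) that(3) by auto
    moreover have "[int u - int v - int d = 0] (mod int n)" using c
      by (simp add: cong_iff_dvd_diff)
    ultimately have "int u - int v - int d = 0" using assms(2)
      by (intro cong_small) auto
    then have "u = v + d" by linarith
    then show False using S(1) that unfolding path_indep_def by blast
  qed
  have "circ_indep D n S" unfolding circ_indep_def
    using S(1) key assms(2) unfolding path_indep_def by auto
  then show ?thesis using S(2) alpha_ge by metis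
qed

lemma fekete:
  fixes p :: "nat \<Rightarrow> nat"
  assumes sub: "\<And>k L r. p (k * L + r) \<le> k * p L + p r" and le: "\<And>n. p n \<le> n"
  shows "(\<lambda>n. real (p n) / real n) \<longlonglongrightarrow> Inf ((\<lambda>L. real (p L) / real L) ` {1..})"
    (is "_ \<longlonglongrightarrow> ?c")
proof (rule order_tendstoI)
  have bdd: "bdd_below ((\<lambda>L. real (p L) / real L) ` {1..})"
    by (rule bdd_belowI[where m=0]) auto
  fix y assume "y < ?c"
  then show "\<forall>\<^sub>F n in sequentially. y < real (p n) / real n"
    unfolding eventually_sequentially
  proof (intro exI[of _ 1] allI impI)
    fix n :: nat assume "1 \<le> n"
    then show "y < real (p n) / real n"
      using less_cINF_D[OF bdd \<open>y < ?c\<close>, of n] by simp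
  qed
next
  fix y assume "?c < y"
  then obtain L where L: "L \<ge> 1" "real (p L) / real L < y"
  proof -
    have "(\<lambda>L. real (p L) / real L) ` {1..} \<noteq> {}" by simp
    from cInf_lessD[OF this \<open>?c < y\<close>] show ?thesis using that by auto
  qed
  define e where "e = y - real (p L) / real L"
  have e: "e > 0" using L by (simp add: e_def)
  obtain N :: nat where N: "real L / e < N" using reals_Archimedean2 by blast
  show "\<forall>\<^sub>F n in sequentially. real (p n) / real n < y"
    unfolding eventually_sequentially
  proof (intro exI[of _ "N+1"] allI impI)
    fix n assume n: "N + 1 \<le> n"
    have n0: "real n > 0" using n by simp
    have "p n = p ((n div L) * L + n mod L)" by simp
    also have "\<dots> \<le> (n div L) * p L + p (n mod L)" by (rule sub)
    also have "\<dots> \<le> (n div L) * p L + L"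
    proof -
      have "n mod L < L" using L(1) by simp
      then have "p (n mod L) \<le> L" using le[of "n mod L"] by linarith
      then show ?thesis by simp
    qed
    finally have "real (p n) \<le> real (n div L) * real (p L) + real L" by (metis of_nat_add of_nat_le_iff of_nat_mult)
    moreover have "real (n div L) * real L \<le> real n"
    proof -
      have "n div L * L \<le> n" by (metis div_mult_mod_eq le_add1)
      then show ?thesis by (metis of_nat_le_iff of_nat_mult)
    qed
    then have "real (n div L) * real L * real (p L) \<le> real n * real (p L)"
      by (rule mult_right_mono) auto
    then have "real (n div L) * real (p L) \<le> real n * (real (p L) / real L)"
      using L(1) by (simp add: field_simps)
    moreover have "real L < e * real n"
    proof -
      have "real L / e < real n" using N n by linarith
      then show ?thesis using e by (simp add: field_simps)
    qed
    ultimately have "real (p n) < real n * (real (p L) / real L + e)" by (simp add: algebra_simps)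
    then show "real (p n) / real n < y" using n0 by (simp add: e_def field_simps)
  qed
qed

lemma periodic_set:
  fixes a b k :: nat
  assumes "1 \<le> a" "a \<le> b"
  shows "k * a \<le> pmax {a..b} (k * (a + b))"
proof -
  define m where "m = a + b"
  define S where "S = (\<lambda>(q, r). q * m + r) ` ({..<k} \<times> {..<a})"
  have inj: "inj_on (\<lambda>(q, r). q * m + r) ({..<k} \<times> {..<a})"
  proof (rule inj_onI, clarify)
    fix q r q' r' assume h: "q * m + r = q' * m + r'" "r < a" "r' < a"
    have "r < m" "r' < m" using h assms by (auto simp: m_def)
    then have "(q * m + r) div m = q" "(q' * m + r') div m = q'"
      "(q * m + r) mod m = r" "(q' * m + r') mod m = r'" by auto
    then show "q = q' \<and> r = r'" using h(1) by metis
  qed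
  have cardS: "card S = k * a" unfolding S_def using card_image[OF inj] by (simp add: card_cartesian_product)
  have "path_indep {a..b} (k * m) S"
    unfolding path_indep_def
  proof (intro conjI ballI)
    show "S \<subseteq> {..<k * m}"
    proof
      fix x assume "x \<in> S"
      then obtain q r where x: "x = q * m + r" "q < k" "r < a" unfolding S_def by auto
      have "Suc q \<le> k" using x by simp
      then have "Suc q * m \<le> k * m" by (rule mult_right_mono) simp
      moreover have "x < Suc q * m" using x by (simp add: m_def)
      ultimately show "x \<in> {..<k * m}" by simp
    qed
  next
    fix u v d assume "u \<in> S" "v \<in> S" "d \<in> {a..b}"
    then obtain q r q' r' where u: "u = q * m + r" "r < a" and v: "v = q' * m + r'" "r' < a"
      and d: "a \<le> d" "d \<le> b" unfolding S_def by auto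
    show "u \<noteq> v + d"
    proof
      assume e: "u = v + d"
      show False
      proof (cases "q \<le> q'")
        case True
        then have "q * m \<le> q' * m" by (rule mult_right_mono) simp
        then show False using e u v d by linarith
      next
        case False
        then have "Suc q' * m \<le> q * m" by (intro mult_right_mono) auto
        then show False using e u v d by (simp add: m_def)
      qed
    qed
  qed
  then show ?thesis using pmax_ge cardS by (metis m_def)
qed

theorem proposition3:
  fixes a b :: nat
  assumes "1 \<le> a" and "a \<le> b"
  shows "alpha_dist {a..b} \<ge> real a / real (a + b)"
proof -
  define D where "D = {a..b}"
  define c where "c = Inf ((\<lambda>L. real (pmax D L) / real L) ` {1..})"
  have P: "(\<lambda>n. real (pmax D n) / real n) \<longlonglongrightarrow> c"
    unfolding c_def by (rule fekete) (auto simp: pmax_mult pmax_le)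
  have A: "(\<lambda>n. real (alpha_circ D n) / real n) \<longlonglongrightarrow> c"
  proof (rule tendsto_sandwich[where f = "\<lambda>n. real (pmax D n) / real n - real b / real n"
        and h = "\<lambda>n. real (pmax D n) / real n"])
    show "\<forall>\<^sub>F n in sequentially. real (alpha_circ D n) / real n \<le> real (pmax D n) / real n"
      using alpha_le_pmax by (intro always_eventually allI divide_right_mono) auto
    show "(\<lambda>n. real (pmax D n) / real n) \<longlonglongrightarrow> c" by (rule P)
    have "(\<lambda>n. real (pmax D n) / real n - real b * (1 / real n)) \<longlonglongrightarrow> c - real b * 0"
      by (intro tendsto_intros P lim_const_over_n lim_inverse_n') 
    then show "(\<lambda>n. real (pmax D n) / real n - real b / real n) \<longlonglongrightarrow> c" by simp
    show "\<forall>\<^sub>F n in sequentially. real (pmax D n) / real n - real b / real n \<le> real (alpha_circ D n) / real n"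
      unfolding eventually_sequentially
    proof (intro exI[of _ b] allI impI)
      fix n assume n: "b \<le> n"
      have "pmax D (n - b) \<le> alpha_circ D n"
        by (rule pmax_le_alpha[where M = b]) (use n assms in \<open>auto simp: D_def\<close>)
      moreover have "pmax D n \<le> pmax D (n - b) + pmax D b"
        using pmax_sub[of D "n - b" b] n by simp
      moreover have "pmax D b \<le> b" by (rule pmax_le)
      ultimately have "real (pmax D n) - real b \<le> real (alpha_circ D n)" by linarith
      then have "(real (pmax D n) - real b) / real n \<le> real (alpha_circ D n) / real n"
        by (rule divide_right_mono) simp
      then show "real (pmax D n) / real n - real b / real n \<le> real (alpha_circ D n) / real n"
        by (simp add: diff_divide_distrib)
    qed
  qed
  have lim: "alpha_dist {a..b} = c" unfolding alpha_dist_def D_def[symmetric] using A by (rule limI)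
  define f where "f k = Suc k * (a + b)" for k
  have sm: "strict_mono f" unfolding f_def using assms by (intro strict_monoI) auto
  have S: "((\<lambda>n. real (pmax D n) / real n) \<circ> f) \<longlonglongrightarrow> c" by (rule LIMSEQ_subseq_LIMSEQ[OF P sm])
  have "real a / real (a + b) \<le> c"
  proof (rule LIMSEQ_le_const[OF S], intro exI allI impI)
    fix k :: nat
    have "Suc k * a \<le> pmax D (f k)" unfolding f_def D_def by (rule periodic_set[OF assms])
    then have "real (Suc k * a) \<le> real (pmax D (f k))" by (rule of_nat_mono)
    moreover have "f k > 0" unfolding f_def using assms by simp
    then have "real (f k) > 0" by simp
    ultimately have "real (Suc k * a) / real (f k) \<le> real (pmax D (f k)) / real (f k)"
      by (intro divide_right_mono) auto
    moreover have "real (Suc k * a) / real (f k) = real a / real (a + b)"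
      unfolding f_def of_nat_mult by (rule mult_divide_mult_cancel_left) simp
    ultimately show "real a / real (a + b) \<le> ((\<lambda>n. real (pmax D n) / real n) \<circ> f) k"
      by simp
  qed
  then show ?thesis using lim by simp
qed

end
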